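(* Let $N\ge1$, let $T$ be the infinite $N$-ary tree, and let $\tilde T$ be the graph with the same vertices and edges as $T$ together with one additional loop edge from $\emptyset$ to itself. For $n\in\mathbb{N}$ let $N_{\tilde T}(n)$ be the number of paths of length $n$ in $\tilde T$ from $\emptyset$ to $\emptyset$, i.e., sequences $(w_0,w_1,\dots,w_n)$ of vertices with $w_0=w_n=\emptyset$ and $w_{k-1},w_k$ joined by an edge of $\tilde T$ for each $k$ (so $w_{k-1}=w_k=\emptyset$ is allowed via the loop). Let $\mu_{c+p}$ be the measure on $[-1,1]$ given by $$d\mu_{c+p}=\frac{\frac{2}{\pi}\sqrt{1-x^2}}{1-2N^{-1/2}x+N^{-1}}\,dx.$$ Then $$\int x^n\,d\mu_{c+p}(x)=\frac{1}{(2\sqrt N)^n}N_{\tilde T}(n),\qquad n\in\mathbb{N}.$$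
   Context: The infinite $N$-ary tree $T$ has vertex set the finite words over $\{1,\dots,N\}$ including the empty word $\emptyset$, and edges exactly the pairs $\{\omega,\omega i\}$, where $\omega i$ is $\omega$ with the letter $i\in\{1,\dots,N\}$ appended. *)

theory Defs
  imports "HOL-Analysis.Analysis"
begin

definition tree_vertices :: "nat \<Rightarrow> nat list set" where
  "tree_vertices N = {w. set w \<subseteq> {1..N}}"

definition tilde_adj :: "nat \<Rightarrow> nat list \<Rightarrow> nat list \<Rightarrow> bool" where
  "tilde_adj N u v \<longleftrightarrow>
     u \<in> tree_vertices N \<and> v \<in> tree_vertices N \<and>
     ((\<exists>i\<in>{1..N}. v = u @ [i] \<or> u = v @ [i]) \<or> (u = [] \<and> v = []))"

definition root_paths :: "nat \<Rightarrow> nat \<Rightarrow> nat list list set" where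
  "root_paths N n = {ws. length ws = n + 1 \<and> ws ! 0 = [] \<and> ws ! n = [] \<and>
      (\<forall>k<n. tilde_adj N (ws ! k) (ws ! (k + 1)))}"

definition N_tilde :: "nat \<Rightarrow> nat \<Rightarrow> nat" where
  "N_tilde N n = card (root_paths N n)"

definition mu_cp_density :: "nat \<Rightarrow> real \<Rightarrow> real" where
  "mu_cp_density N x = (2 / pi) * sqrt (1 - x\<^sup>2) / (1 - 2 * x / sqrt (real N) + 1 / real N)"

end

theory Submission
  imports Defs
begin


definition walks :: "nat \<Rightarrow> nat \<Rightarrow> nat list \<Rightarrow> nat list list set" where
  "walks N n v = {ws. length ws = n + 1 \<and> ws ! 0 = [] \<and> ws ! n = v \<and>
      (\<forall>k<n. tilde_adj N (ws ! k) (ws ! (k + 1)))}"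

fun Wc :: "nat \<Rightarrow> nat \<Rightarrow> nat \<Rightarrow> nat" where
  "Wc N 0 d = (if d = 0 then 1 else 0)"
| "Wc N (Suc n) 0 = Wc N n 0 + N * Wc N n 1"
| "Wc N (Suc n) (Suc d) = Wc N n d + N * Wc N n (Suc (Suc d))"

lemma walks_0: "walks N 0 v = (if v = [] then {[[]]} else {})"
proof -
  have "ws \<in> walks N 0 v \<longleftrightarrow> v = [] \<and> ws = [[]]" for ws
    unfolding walks_def by (cases ws) auto
  then show ?thesis by auto
qed

lemma walks_Suc: "walks N (Suc n) v = (\<Union>u\<in>{u. tilde_adj N u v}. (\<lambda>ws. ws @ [v]) ` walks N n u)"
proof (intro equalityI subsetI)
  fix ws assume ws: "ws \<in> walks N (Suc n) v"
  hence len: "length ws = n + 2" and h0: "ws ! 0 = []" and hn: "ws ! Suc n = v"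
    and adj: "\<forall>k<Suc n. tilde_adj N (ws ! k) (ws ! (k + 1))" by (auto simp: walks_def)
  define ws' where "ws' = butlast ws"
  have eq: "ws = ws' @ [v]"
    using len hn unfolding ws'_def
    by (metis append_butlast_last_id diff_Suc_1 last_conv_nth length_greater_0_conv add_2_eq_Suc' zero_less_Suc list.size(3) nat.distinct(1))
  have len': "length ws' = n + 1" using len by (simp add: ws'_def)
  have nth': "\<And>k. k \<le> n \<Longrightarrow> ws' ! k = ws ! k" using len' unfolding ws'_def
    by (simp add: nth_butlast)
  have "ws' \<in> walks N n (ws ! n)"
    unfolding walks_def using len' nth' h0 adj by auto
  moreover have "tilde_adj N (ws ! n) v" using adj hn by auto
  ultimately show "ws \<in> (\<Union>u\<in>{u. tilde_adj N u v}. (\<lambda>ws. ws @ [v]) ` walks N n u)"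
    using eq by blast
next
  fix ws assume "ws \<in> (\<Union>u\<in>{u. tilde_adj N u v}. (\<lambda>ws. ws @ [v]) ` walks N n u)"
  then obtain u ws' where u: "tilde_adj N u v" and w': "ws' \<in> walks N n u" and eq: "ws = ws' @ [v]"
    by blast
  from w' have len': "length ws' = n + 1" and h0: "ws' ! 0 = []" and hn: "ws' ! n = u"
    and adj: "\<forall>k<n. tilde_adj N (ws' ! k) (ws' ! (k + 1))" by (auto simp: walks_def)
  have nth: "\<And>k. k \<le> n \<Longrightarrow> ws ! k = ws' ! k" using len' eq by (simp add: nth_append)
  have last: "ws ! Suc n = v" using len' eq by (simp add: nth_append)
  have "\<forall>k<Suc n. tilde_adj N (ws ! k) (ws ! (k + 1))"
  proof (intro allI impI)
    fix k assume k: "k < Suc n"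
    show "tilde_adj N (ws ! k) (ws ! (k + 1))"
    proof (cases "k = n")
      case True thus ?thesis using last nth hn u by simp
    next
      case False thus ?thesis using k adj nth by simp
    qed
  qed
  then show "ws \<in> walks N (Suc n) v"
    unfolding walks_def using len' eq h0 nth last by auto
qed

lemma nbrs_finite: "finite {u. tilde_adj N u v}"
proof -
  have "{u. tilde_adj N u v} \<subseteq> {[], butlast v} \<union> (\<lambda>i. v @ [i]) ` {1..N}"
    unfolding tilde_adj_def by auto
  thus ?thesis by (rule finite_subset) auto
qed

lemma walks_finite: "finite (walks N n v)"
proof (induction n arbitrary: v)
  case 0 thus ?case by (simp add: walks_0)
next
  case (Suc n) thus ?case by (simp add: walks_Suc nbrs_finite)
qed

lemma card_walks_Suc: "card (walks N (Suc n) v) = (\<Sum>u\<in>{u. tilde_adj N u v}. card (walks N n u))"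
  unfolding walks_Suc
proof (subst card_UN_disjoint)
  show "finite {u. tilde_adj N u v}" by (rule nbrs_finite)
  show "\<forall>u\<in>{u. tilde_adj N u v}. finite ((\<lambda>ws. ws @ [v]) ` walks N n u)"
    by (simp add: walks_finite)
  show "\<forall>u\<in>{u. tilde_adj N u v}. \<forall>u'\<in>{u. tilde_adj N u v}. u \<noteq> u' \<longrightarrow>
    (\<lambda>ws. ws @ [v]) ` walks N n u \<inter> (\<lambda>ws. ws @ [v]) ` walks N n u' = {}"
    by (auto simp: walks_def)
  show "(\<Sum>u\<in>{u. tilde_adj N u v}. card ((\<lambda>ws. ws @ [v]) ` walks N n u)) =
    (\<Sum>u\<in>{u. tilde_adj N u v}. card (walks N n u))"
    by (intro sum.cong refl card_image) (auto simp: inj_on_def)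
qed

lemma nbrs_eq:
  assumes "v \<in> tree_vertices N"
  shows "{u. tilde_adj N u v} = (if v = [] then {[]} else {butlast v}) \<union> (\<lambda>i. v @ [i]) ` {1..N}"
proof -
  have 1: "u \<in> tree_vertices N" if "v \<noteq> []" "u = butlast v" for u
    using assms that in_set_butlastD unfolding tree_vertices_def by fastforce
  have 2: "v = butlast v @ [last v] \<and> last v \<in> {1..N}" if "v \<noteq> []"
  proof -
    have "last v \<in> set v" using that by simp
    moreover have "set v \<subseteq> {1..N}" using assms unfolding tree_vertices_def by simp
    ultimately have "last v \<in> {1..N}" by blast
    thus ?thesis using that by simp
  qed
  have 3: "v @ [i] \<in> tree_vertices N" if "i \<in> {1..N}" for i
    using assms that unfolding tree_vertices_def by auto
  have 4: "Suc 0 \<le> last v \<and> last v \<le> N" if "v \<noteq> []"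
    using 2[OF that] by auto
  show ?thesis
    using assms 1 2 3 4 unfolding tilde_adj_def
    apply (auto simp: tree_vertices_def)
    by (metis "2" butlast_snoc atLeastAtMost_iff One_nat_def append_butlast_last_id)+
qed

lemma card_walks: "v \<in> tree_vertices N \<Longrightarrow> card (walks N n v) = Wc N n (length v)"
proof (induction n arbitrary: v)
  case 0 thus ?case by (simp add: walks_0)
next
  case (Suc n)
  have ch: "(\<Sum>u\<in>(\<lambda>i. v @ [i]) ` {1..N}. card (walks N n u)) = N * Wc N n (Suc (length v))"
  proof -
    have "(\<Sum>u\<in>(\<lambda>i. v @ [i]) ` {1..N}. card (walks N n u)) = (\<Sum>i\<in>{1..N}. card (walks N n (v @ [i])))"
      by (subst sum.reindex) (auto simp: inj_on_def)
    also have "\<dots> = (\<Sum>i\<in>{1..N}. Wc N n (Suc (length v)))"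
    proof (intro sum.cong refl)
      fix i assume "i \<in> {1..N}"
      hence "v @ [i] \<in> tree_vertices N" using Suc.prems by (auto simp: tree_vertices_def)
      thus "card (walks N n (v @ [i])) = Wc N n (Suc (length v))" using Suc.IH by simp
    qed
    finally show ?thesis by simp
  qed
  show ?case
  proof (cases "v = []")
    case True
    have "card (walks N (Suc n) v) = card (walks N n []) + (\<Sum>u\<in>(\<lambda>i. v @ [i]) ` {1..N}. card (walks N n u))"
      unfolding card_walks_Suc nbrs_eq[OF Suc.prems] using True
      by (subst sum.union_disjoint) auto
    also have "card (walks N n []) = Wc N n 0" using Suc.IH[of "[]"] by (simp add: tree_vertices_def)
    finally show ?thesis using ch True by simp
  next
    case False
    then obtain d where d: "length v = Suc d" by (cases v) auto
    have bt: "butlast v \<in> tree_vertices N" using Suc.prems in_set_butlastD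
      unfolding tree_vertices_def by fastforce
    have "card (walks N (Suc n) v) = card (walks N n (butlast v)) + (\<Sum>u\<in>(\<lambda>i. v @ [i]) ` {1..N}. card (walks N n u))"
      unfolding card_walks_Suc nbrs_eq[OF Suc.prems] using False
      by (subst sum.union_disjoint) (auto dest: arg_cong[of _ _ length])
    also have "card (walks N n (butlast v)) = Wc N n d" using Suc.IH[OF bt] d by simp
    finally show ?thesis using ch d by simp
  qed
qed

lemma N_tilde_Wc: "N_tilde N n = Wc N n 0"
proof -
  have "root_paths N n = walks N n []" unfolding root_paths_def walks_def by simp
  thus ?thesis unfolding N_tilde_def using card_walks[of "[]" N n] by (simp add: tree_vertices_def)
qed



fun Uc :: "nat \<Rightarrow> real \<Rightarrow> real" where
  "Uc 0 x = 1"
| "Uc (Suc 0) x = 2 * x"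
| "Uc (Suc (Suc k)) x = 2 * x * Uc (Suc k) x - Uc k x"

lemma nat_induct012: "P 0 \<Longrightarrow> P (Suc 0) \<Longrightarrow> (\<And>k. P k \<Longrightarrow> P (Suc k) \<Longrightarrow> P (Suc (Suc k))) \<Longrightarrow> P k"
  by (induction k rule: nat_less_induct) (metis less_Suc_eq nat.exhaust)

lemma Uc_cos: "Uc k (cos t) * sin t = sin (real (Suc k) * t)"
proof (induction k rule: nat_induct012)
  case 1 thus ?case by simp
next
  case 2 thus ?case by (simp add: sin_double)
next
  case (3 k)
  have a0: "real (Suc (Suc (Suc k))) * t = real (Suc (Suc k)) * t + t" by (simp add: algebra_simps)
  have a: "sin (real (Suc (Suc (Suc k))) * t) = sin (real (Suc (Suc k)) * t) * cos t + cos (real (Suc (Suc k)) * t) * sin t"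
    unfolding a0 by (rule sin_add)
  have b0: "real (Suc k) * t = real (Suc (Suc k)) * t - t" by (simp add: algebra_simps)
  have b: "sin (real (Suc k) * t) = sin (real (Suc (Suc k)) * t) * cos t - cos (real (Suc (Suc k)) * t) * sin t"
    unfolding b0 by (rule sin_diff)
  have "Uc (Suc (Suc k)) (cos t) * sin t = 2 * cos t * (Uc (Suc k) (cos t) * sin t) - Uc k (cos t) * sin t"
    by (simp add: algebra_simps)
  also have "\<dots> = 2 * cos t * sin (real (Suc (Suc k)) * t) - sin (real (Suc k) * t)"
    using 3 by (simp only:)
  also have "\<dots> = sin (real (Suc (Suc (Suc k))) * t)" using a b by (simp add: algebra_simps)
  finally show ?case .
qed

lemma Uc_one: "Uc k 1 = real (Suc k)"
  by (induction k rule: nat_induct012) auto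

lemma Uc_mone: "Uc k (-1) = (-1)^k * real (Suc k)"
  by (induction k rule: nat_induct012) (auto simp: algebra_simps)

lemma sin_mult_bound: "\<bar>sin (real m * t)\<bar> \<le> real m * \<bar>sin t\<bar>"
proof (induction m)
  case 0 thus ?case by simp
next
  case (Suc m)
  have "real (Suc m) * t = real m * t + t" by (simp add: algebra_simps)
  hence "sin (real (Suc m) * t) = sin (real m * t) * cos t + cos (real m * t) * sin t"
    by (simp only: sin_add)
  also have "\<bar>\<dots>\<bar> \<le> \<bar>sin (real m * t)\<bar> * \<bar>cos t\<bar> + \<bar>cos (real m * t)\<bar> * \<bar>sin t\<bar>"
    by (metis abs_mult abs_triangle_ineq)
  also have "\<dots> \<le> \<bar>sin (real m * t)\<bar> * 1 + 1 * \<bar>sin t\<bar>"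
    by (intro add_mono mult_left_mono mult_right_mono) auto
  finally show ?case using Suc by (simp add: algebra_simps)
qed

lemma Uc_bound: assumes "-1 \<le> x" "x \<le> 1" shows "\<bar>Uc k x\<bar> \<le> real (Suc k)"
proof (cases "x = 1 \<or> x = -1")
  case True thus ?thesis by (auto simp: Uc_one Uc_mone abs_mult)
next
  case False
  define t where "t = arccos x"
  have c: "cos t = x" using assms by (simp add: t_def)
  have s: "sin t = sqrt (1 - x\<^sup>2)" using assms by (simp add: t_def sin_arccos)
  have "\<bar>x\<bar> < 1" using assms False by auto
  hence "x\<^sup>2 < 1" by (simp add: abs_square_less_1)
  hence sp: "sin t > 0" using s by simp
  have "\<bar>Uc k x\<bar> * sin t = \<bar>sin (real (Suc k) * t)\<bar>"
    using Uc_cos[of k t] c sp by (metis abs_mult abs_of_pos)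
  also have "\<dots> \<le> real (Suc k) * sin t" using sin_mult_bound[of "Suc k" t] sp by simp
  finally show ?thesis using sp by simp
qed

lemma continuous_Uc: "continuous_on S (Uc k)"
  by (induction k rule: nat_induct012) (auto intro!: continuous_intros)

definition semi :: "real \<Rightarrow> real" where "semi x = 2 / pi * sqrt (1 - x\<^sup>2)"

lemma semi_Uc: "((\<lambda>x. Uc k x * semi x) has_integral (if k = 0 then 1 else 0)) {-1..1}"
proof -
  define G :: "real \<Rightarrow> real" where
    "G = (\<lambda>t. if k = 0 then (t - sin (2 * t) / 2) / 2
             else (sin (real k * t) / real k - sin (real (k + 2) * t) / real (k + 2)) / 2)"
  have dG: "(G has_real_derivative (sin (real (Suc k) * t) * sin t)) (at t)" for t
  proof (cases "k = 0")
    case True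
    have "((\<lambda>t. (t - sin (2 * t) / 2) / 2) has_real_derivative ((1 - cos (2 * t) * 2 / 2) / 2)) (at t)"
      by (auto intro!: derivative_eq_intros)
    moreover have "(1 - cos (2 * t) * 2 / 2) / 2 = sin (real (Suc k) * t) * sin t"
      using True cos_double_sin[of t] by (simp add: power2_eq_square algebra_simps)
    ultimately show ?thesis using True unfolding G_def by simp
  next
    case False
    have "((\<lambda>t. (sin (real k * t) / real k - sin (real (k + 2) * t) / real (k + 2)) / 2) has_real_derivative
         ((cos (real k * t) * real k / real k - cos (real (k + 2) * t) * real (k + 2) / real (k + 2)) / 2)) (at t)"
      by (auto intro!: derivative_eq_intros)
    moreover have "(cos (real k * t) * real k / real k - cos (real (k + 2) * t) * real (k + 2) / real (k + 2)) / 2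
       = sin (real (Suc k) * t) * sin t"
    proof -
      have "sin (real (Suc k) * t) * sin t = (cos (real (Suc k) * t - t) - cos (real (Suc k) * t + t)) / 2"
        by (rule sin_times_sin)
      also have "real (Suc k) * t - t = real k * t" by (simp add: algebra_simps)
      also have "real (Suc k) * t + t = real (k + 2) * t" by (simp add: algebra_simps)
      finally show ?thesis using False by simp
    qed
    ultimately show ?thesis using False unfolding G_def by simp
  qed
  define F where "F = (\<lambda>x. - (2 / pi) * G (arccos x))"
  have contG: "continuous_on UNIV G"
    using DERIV_isCont[OF dG] by (simp add: continuous_at_imp_continuous_on)
  have contF: "continuous_on {-1..1} F" unfolding F_def
    by (intro continuous_intros continuous_on_compose2[OF contG]) auto
  have derF: "(F has_vector_derivative Uc k x * semi x) (at x)" if x: "x \<in> {-1<..<1}" for x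
  proof -
    have d: "(F has_real_derivative - (2 / pi) * (sin (real (Suc k) * arccos x) * sin (arccos x) * inverse (- sqrt (1 - x\<^sup>2)))) (at x)"
      unfolding F_def using x by (intro DERIV_cmult DERIV_chain2[OF dG] DERIV_arccos) auto
    have "\<bar>x\<bar> < 1" using x by auto
    hence "x\<^sup>2 < 1" by (simp add: abs_square_less_1)
    hence sq: "sqrt (1 - x\<^sup>2) > 0" by simp
    have s: "sin (arccos x) = sqrt (1 - x\<^sup>2)" using x by (simp add: sin_arccos)
    have e: "sin (real (Suc k) * arccos x) = Uc k x * sqrt (1 - x\<^sup>2)"
      using Uc_cos[of k "arccos x"] x s by simp
    have "- (2 / pi) * (sin (real (Suc k) * arccos x) * sin (arccos x) * inverse (- sqrt (1 - x\<^sup>2)))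
          = Uc k x * semi x"
      using sq unfolding e s semi_def by (simp add: field_simps)
    with d show ?thesis by (simp add: has_real_derivative_iff_has_vector_derivative)
  qed
  have "((\<lambda>x. Uc k x * semi x) has_integral (F 1 - F (-1))) {-1..1}"
    by (rule fundamental_theorem_of_calculus_interior[OF _ contF derF]) auto
  moreover have "F 1 - F (-1) = (if k = 0 then 1 else 0)"
  proof -
    have "sin (real (k + 2) * pi) = 0" by (rule sin_npi)
    thus ?thesis unfolding F_def G_def by auto
  qed
  ultimately show ?thesis by simp
qed



fun Pc :: "real \<Rightarrow> nat \<Rightarrow> real \<Rightarrow> real" where
  "Pc a 0 x = 1"
| "Pc a (Suc k) x = Uc (Suc k) x - a * Uc k x"

lemma Pc_rec0: "2 * x * Pc a 0 x = a * Pc a 0 x + Pc a 1 x" by simp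

lemma Pc_rec: "2 * x * Pc a (Suc k) x = Pc a (Suc (Suc k)) x + Pc a k x"
  by (cases k) (auto simp: algebra_simps)

lemma continuous_Pc: "continuous_on S (Pc a k)"
  by (cases k) (auto intro!: continuous_intros continuous_Uc)

lemma Pc_bound: assumes "-1 \<le> x" "x \<le> 1" "0 \<le> a" "a \<le> 1" shows "\<bar>Pc a k x\<bar> \<le> 2 * real (Suc k)"
proof (cases k)
  case 0 thus ?thesis by simp
next
  case (Suc j)
  have "\<bar>Pc a k x\<bar> \<le> \<bar>Uc (Suc j) x\<bar> + \<bar>a * Uc j x\<bar>" using Suc by (simp add: abs_triangle_ineq4)
  also have "\<dots> = \<bar>Uc (Suc j) x\<bar> + a * \<bar>Uc j x\<bar>" using assms by (simp add: abs_mult)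
  also have "\<dots> \<le> real (Suc (Suc j)) + 1 * real (Suc j)"
  proof (intro add_mono mult_mono)
    show "\<bar>Uc (Suc j) x\<bar> \<le> real (Suc (Suc j))" by (rule Uc_bound[OF assms(1,2)])
    show "\<bar>Uc j x\<bar> \<le> real (Suc j)" by (rule Uc_bound[OF assms(1,2)])
  qed (use assms in auto)
  finally show ?thesis using Suc by simp
qed

lemma semi_Pc: "((\<lambda>x. Pc a k x * semi x) has_integral (if k = 0 then 1 else if k = 1 then - a else 0)) {-1..1}"
proof (cases k)
  case 0 thus ?thesis using semi_Uc[of 0] by simp
next
  case (Suc j)
  have "((\<lambda>x. Uc (Suc j) x * semi x - a * (Uc j x * semi x)) has_integral (0 - a * (if j = 0 then 1 else 0))) {-1..1}"
    by (intro has_integral_diff has_integral_mult_right) (use semi_Uc[of "Suc j"] semi_Uc[of j] in auto)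
  moreover have "(\<lambda>x. Uc (Suc j) x * semi x - a * (Uc j x * semi x)) = (\<lambda>x. Pc a k x * semi x)"
    using Suc by (simp add: fun_eq_iff algebra_simps)
  moreover have "(0 - a * (if j = 0 then 1 else 0)) = (if k = 0 then 1 else if k = 1 then - a else 0)"
    using Suc by simp
  ultimately show ?thesis by simp
qed

fun Vc :: "real \<Rightarrow> nat \<Rightarrow> nat \<Rightarrow> real" where
  "Vc a 0 k = (if k = 0 then 1 else 0)"
| "Vc a (Suc n) 0 = (a * Vc a n 0 + Vc a n 1) / 2"
| "Vc a (Suc n) (Suc k) = (Vc a n k + Vc a n (Suc (Suc k))) / 2"

lemma Vc_Wc:
  assumes "N \<ge> 1"
  shows "Vc (1 / sqrt (real N)) n d = real (Wc N n d) * sqrt (real N) ^ d / (2 * sqrt (real N)) ^ n"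
proof (induction n arbitrary: d)
  case 0 thus ?case by simp
next
  case (Suc n)
  define s where "s = sqrt (real N)"
  have s: "s > 0" "s * s = real N" using assms by (auto simp: s_def)
  have ih: "\<And>d. Vc (1 / s) n d = real (Wc N n d) * s ^ d / (2 * s) ^ n" using Suc.IH by (simp add: s_def)
  show ?case
  proof (cases d)
    case 0
    show ?thesis unfolding 0 Vc.simps ih Wc.simps s_def[symmetric]
      using s by (simp add: field_simps)
  next
    case (Suc d')
    show ?thesis unfolding Suc Vc.simps ih Wc.simps s_def[symmetric]
      using s by (simp add: field_simps)
  qed
qed



definition Dn :: "nat \<Rightarrow> real \<Rightarrow> real" where
  "Dn N x = 1 - 2 * x / sqrt (real N) + 1 / real N"

lemma rho_eq: "mu_cp_density N x = semi x / Dn N x"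
  unfolding mu_cp_density_def semi_def Dn_def by simp

lemma Dn_a: assumes "N \<ge> 1" shows "Dn N x = 1 - 2 * (1 / sqrt (real N)) * x + (1 / sqrt (real N))\<^sup>2"
  using assms unfolding Dn_def by (simp add: power_divide)

lemma Dn_sq: assumes "N \<ge> 1" shows "Dn N x = (1 - 1 / sqrt (real N))\<^sup>2 + 2 * (1 / sqrt (real N)) * (1 - x)"
  unfolding Dn_a[OF assms] using assms by (simp add: power2_eq_square field_simps)

lemma Dn_nonneg: assumes "N \<ge> 1" "x \<le> 1" shows "0 \<le> Dn N x"
  unfolding Dn_sq[OF assms(1)] using assms by (intro add_nonneg_nonneg mult_nonneg_nonneg) auto

lemma Dn_zero: assumes "N \<ge> 1" "x \<le> 1" "Dn N x = 0" shows "x = 1"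
proof -
  have a: "1 / sqrt (real N) > 0" using assms by simp
  have "0 \<le> (1 - 1 / sqrt (real N))\<^sup>2" by simp
  moreover have "0 \<le> 2 * (1 / sqrt (real N)) * (1 - x)" using a assms by simp
  ultimately have "2 * (1 / sqrt (real N)) * (1 - x) = 0" using assms(3) unfolding Dn_sq[OF assms(1)] by linarith
  thus ?thesis using a by simp
qed

lemma D_rho: assumes "N \<ge> 1" "x \<in> {-1..1}" shows "Dn N x * mu_cp_density N x = semi x"
proof (cases "Dn N x = 0")
  case True
  hence "x = 1" using Dn_zero assms by auto
  thus ?thesis using True by (simp add: semi_def)
next
  case False thus ?thesis by (simp add: rho_eq)
qed

lemma semi_nonneg: assumes "x \<in> {-1..1}" shows "0 \<le> semi x"
proof -
  have "\<bar>x\<bar> \<le> 1" using assms by auto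
  hence "x\<^sup>2 \<le> 1" by (simp add: abs_square_le_1)
  thus ?thesis by (simp add: semi_def)
qed

lemma rho_nonneg: assumes "N \<ge> 1" "x \<in> {-1..1}" shows "0 \<le> mu_cp_density N x"
  unfolding rho_eq using Dn_nonneg[OF assms(1)] assms semi_nonneg by simp

lemma M0_N1: "(mu_cp_density 1 has_integral 1) {-1..1}"
proof -
  define F where "F = (\<lambda>x. (arcsin x - sqrt (1 - x\<^sup>2)) / pi)"
  have contF: "continuous_on {-1..1} F" unfolding F_def by (auto intro!: continuous_intros)
  have derF: "(F has_vector_derivative mu_cp_density 1 x) (at x)" if x: "x \<in> {-1<..<1}" for x
  proof -
    have "\<bar>x\<bar> < 1" using x by auto
    hence x2: "x\<^sup>2 < 1" by (simp add: abs_square_less_1)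
    define q where "q = sqrt (1 - x\<^sup>2)"
    have q: "q > 0" "q * q = 1 - x\<^sup>2" using x2 by (auto simp: q_def)
    have d1: "(arcsin has_real_derivative inverse q) (at x)" unfolding q_def using x by (intro DERIV_arcsin) auto
    have d0: "((\<lambda>x. 1 - x\<^sup>2) has_real_derivative - (2 * x)) (at x)"
      by (auto intro!: derivative_eq_intros)
    have d2: "((\<lambda>x. sqrt (1 - x\<^sup>2)) has_real_derivative (inverse q / 2 * (- (2 * x)))) (at x)"
      unfolding q_def using DERIV_chain2[OF DERIV_real_sqrt d0] x2 by simp
    have d: "(F has_real_derivative (inverse q - inverse q / 2 * (- (2 * x))) / pi) (at x)"
      unfolding F_def by (intro DERIV_cdivide DERIV_diff d1 d2)
    have x1: "1 - x > 0" using x by simp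
    have e1: "inverse q - inverse q / 2 * (- (2 * x)) = (1 + x) / q" using q by (simp add: field_simps)
    have e2: "(1 + x) / q = q / (1 - x)" using q x1
      by (simp add: frac_eq_eq algebra_simps power2_eq_square)
    have "(inverse q - inverse q / 2 * (- (2 * x))) / pi = 2 / pi * q / (1 - 2 * x + 1)"
      unfolding e1 e2 using x1 by (simp add: field_simps)
    also have "\<dots> = mu_cp_density 1 x" unfolding mu_cp_density_def q_def by simp
    finally show ?thesis using d by (simp add: has_real_derivative_iff_has_vector_derivative)
  qed
  have "(mu_cp_density 1 has_integral (F 1 - F (-1))) {-1..1}"
    by (rule fundamental_theorem_of_calculus_interior[OF _ contF derF]) auto
  moreover have "F 1 - F (-1) = 1" unfolding F_def by simp
  ultimately show ?thesis by simp
qed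

lemma rho_integrable: assumes "N \<ge> 1" shows "mu_cp_density N integrable_on {-1..1}"
proof (cases "N = 1")
  case True thus ?thesis using M0_N1 by blast
next
  case False
  hence "real N > 1" using assms by simp
  hence "sqrt (real N) > 1" by simp
  hence "1 / sqrt (real N) < 1" by simp
  hence "1 - 1 / sqrt (real N) > 0" by simp
  hence pos: "(1 - 1 / sqrt (real N))\<^sup>2 > 0" by (rule zero_less_power)
  have "Dn N x > 0" if "x \<in> {-1..1}" for x
    unfolding Dn_sq[OF assms] using that pos by (intro add_pos_nonneg mult_nonneg_nonneg) auto
  hence "continuous_on {-1..1} (mu_cp_density N)"
    unfolding rho_eq semi_def Dn_def using assms by (intro continuous_intros) force+
  thus ?thesis by (rule integrable_continuous_interval)
qed

lemma rho_abs_int: assumes "N \<ge> 1" shows "mu_cp_density N absolutely_integrable_on {-1..1}"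
  by (rule nonnegative_absolutely_integrable_1[OF rho_integrable[OF assms]]) (use rho_nonneg assms in auto)

lemma L_int: assumes "N \<ge> 1" "continuous_on {-1..1} f"
  shows "(\<lambda>x. f x * mu_cp_density N x) integrable_on {-1..1}"
proof -
  have "(\<lambda>x. f x * mu_cp_density N x) absolutely_integrable_on {-1..1}"
  proof (rule absolutely_integrable_bounded_measurable_product_real)
    show "f \<in> borel_measurable (lebesgue_on {-1..1})"
      by (rule continuous_imp_measurable_on_sets_lebesgue[OF assms(2)]) auto
    show "bounded (f ` {-1..1})"
      by (intro compact_imp_bounded compact_continuous_image assms(2)) auto
  qed (use rho_abs_int[OF assms(1)] in auto)
  thus ?thesis using absolutely_integrable_on_def by blast
qed



definition L :: "nat \<Rightarrow> (real \<Rightarrow> real) \<Rightarrow> real" where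
  "L N f = integral {-1..1} (\<lambda>x. f x * mu_cp_density N x)"

lemma L_has: assumes "N \<ge> 1" "continuous_on {-1..1} f"
  shows "((\<lambda>x. f x * mu_cp_density N x) has_integral L N f) {-1..1}"
  unfolding L_def using L_int[OF assms] by (simp add: integrable_integral)

lemma L_lin: assumes "N \<ge> 1" "continuous_on {-1..1} f" "continuous_on {-1..1} g"
  shows "L N (\<lambda>x. c * f x + d * g x) = c * L N f + d * L N g"
proof -
  have "((\<lambda>x. c * (f x * mu_cp_density N x) + d * (g x * mu_cp_density N x)) has_integral (c * L N f + d * L N g)) {-1..1}"
    by (intro has_integral_add has_integral_mult_right L_has assms)
  hence "((\<lambda>x. (c * f x + d * g x) * mu_cp_density N x) has_integral (c * L N f + d * L N g)) {-1..1}"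
    by (simp add: algebra_simps)
  thus ?thesis unfolding L_def by (rule integral_unique)
qed

lemma L_cong: "(\<And>x. x \<in> {-1..1} \<Longrightarrow> f x = g x) \<Longrightarrow> L N f = L N g"
  unfolding L_def by (intro integral_cong) auto

lemma L_D: assumes "N \<ge> 1"
  shows "L N (\<lambda>x. Dn N x * f x) = integral {-1..1} (\<lambda>x. f x * semi x)"
  unfolding L_def using D_rho[OF assms] by (intro integral_cong) (metis mult.assoc mult.commute)

lemma L_bound: assumes "N \<ge> 1" "continuous_on {-1..1} f" "\<And>x. x \<in> {-1..1} \<Longrightarrow> \<bar>f x\<bar> \<le> B"
  shows "\<bar>L N f\<bar> \<le> B * integral {-1..1} (mu_cp_density N)"
proof -
  have "norm (integral {-1..1} (\<lambda>x. f x * mu_cp_density N x)) \<le> integral {-1..1} (\<lambda>x. B * mu_cp_density N x)"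
  proof (rule integral_norm_bound_integral)
    show "(\<lambda>x. f x * mu_cp_density N x) integrable_on {-1..1}" by (rule L_int[OF assms(1,2)])
    show "(\<lambda>x. B * mu_cp_density N x) integrable_on {-1..1}"
      using L_int[OF assms(1) continuous_on_const[of _ B]] by simp
    show "norm (f x * mu_cp_density N x) \<le> B * mu_cp_density N x" if "x \<in> {-1..1}" for x
      using assms(3)[OF that] rho_nonneg[OF assms(1) that] by (simp add: abs_mult mult_right_mono)
  qed
  thus ?thesis unfolding L_def by simp
qed



lemma cPc: "continuous_on {-1..1} (Pc a k)" by (rule continuous_Pc)

lemma K_E0: assumes "N \<ge> 1" "a = 1 / sqrt (real N)"
  shows "L N (Pc a 0) - a * L N (Pc a 1) = 1"
proof -
  have "L N (\<lambda>x. Dn N x * Pc a 0 x) = 1"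
    unfolding L_D[OF assms(1)] using semi_Pc[of a 0] by (simp add: integral_unique)
  moreover have "L N (\<lambda>x. Dn N x * Pc a 0 x) = L N (\<lambda>x. 1 * Pc a 0 x + (- a) * Pc a 1 x)"
    by (rule L_cong) (simp add: Dn_a[OF assms(1)] assms(2)[symmetric] power2_eq_square algebra_simps)
  moreover have "\<dots> = 1 * L N (Pc a 0) + (- a) * L N (Pc a 1)"
    by (rule L_lin[OF assms(1) cPc cPc])
  ultimately show ?thesis by simp
qed

lemma K_E: assumes "N \<ge> 1" "a = 1 / sqrt (real N)"
  shows "(1 + a\<^sup>2) * L N (Pc a (Suc j)) - a * (L N (Pc a (Suc (Suc j))) + L N (Pc a j)) = (if j = 0 then - a else 0)"
proof -
  have "L N (\<lambda>x. Dn N x * Pc a (Suc j) x) = (if j = 0 then - a else 0)"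
    unfolding L_D[OF assms(1)] using semi_Pc[of a "Suc j"] by (simp add: integral_unique)
  moreover have "L N (\<lambda>x. Dn N x * Pc a (Suc j) x) =
      L N (\<lambda>x. (1 + a\<^sup>2) * Pc a (Suc j) x + (- a) * (\<lambda>x. 1 * Pc a (Suc (Suc j)) x + 1 * Pc a j x) x)"
  proof (rule L_cong)
    fix x :: real
    have r: "2 * x * Pc a (Suc j) x = Pc a (Suc (Suc j)) x + Pc a j x" by (rule Pc_rec)
    have "Dn N x * Pc a (Suc j) x = (1 + a\<^sup>2) * Pc a (Suc j) x - a * (2 * x * Pc a (Suc j) x)"
      by (simp add: Dn_a[OF assms(1)] assms(2)[symmetric] algebra_simps)
    thus "Dn N x * Pc a (Suc j) x = (1 + a\<^sup>2) * Pc a (Suc j) x + (- a) * (\<lambda>x. 1 * Pc a (Suc (Suc j)) x + 1 * Pc a j x) x"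
      unfolding r by simp
  qed
  moreover have "\<dots> = (1 + a\<^sup>2) * L N (Pc a (Suc j)) + (- a) * L N (\<lambda>x. 1 * Pc a (Suc (Suc j)) x + 1 * Pc a j x)"
    by (rule L_lin[OF assms(1) cPc]) (intro continuous_intros cPc)
  moreover have "L N (\<lambda>x. 1 * Pc a (Suc (Suc j)) x + 1 * Pc a j x) = 1 * L N (Pc a (Suc (Suc j))) + 1 * L N (Pc a j)"
    by (rule L_lin[OF assms(1) cPc cPc])
  ultimately show ?thesis by simp
qed

lemma K_step: assumes "N \<ge> 1" "a = 1 / sqrt (real N)"
  shows "L N (Pc a (Suc j)) = a * L N (Pc a (Suc (Suc j)))"
proof -
  define E where "E k = L N (Pc a k) - a * L N (Pc a (Suc k))" for k
  have E0: "E 0 = 1" using K_E0[OF assms] by (simp add: E_def)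
  have ES: "E (Suc j) = a * E j + (if j = 0 then - a else 0)" for j
  proof -
    have "(1 + a\<^sup>2) * L N (Pc a (Suc j)) - a * (L N (Pc a (Suc (Suc j))) + L N (Pc a j)) = (if j = 0 then - a else 0)"
      by (rule K_E[OF assms])
    thus ?thesis unfolding E_def power2_eq_square by (simp only: algebra_simps)
  qed
  have Ez: "E (Suc j) = 0" for j
  proof (induction j)
    case 0 thus ?case using ES[of 0] E0 by simp
  next
    case (Suc j) thus ?case using ES[of "Suc j"] by (simp del: Pc.simps)
  qed
  from Ez[of j] show ?thesis unfolding E_def by (simp del: Pc.simps)
qed

lemma K1_pow: assumes "N \<ge> 1" "a = 1 / sqrt (real N)"
  shows "L N (Pc a 1) = a ^ j * L N (Pc a (Suc j))"
proof (induction j)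
  case 0 thus ?case by simp
next
  case (Suc j) thus ?case using K_step[OF assms, of j] by (simp del: Pc.simps)
qed

lemma K1_zero: assumes "N \<ge> 1" "a = 1 / sqrt (real N)"
  shows "L N (Pc a 1) = 0"
proof (cases "N = 1")
  case True
  have a1: "a = 1" using assms True by simp
  have "L N (Pc a 0) = integral {-1..1} (mu_cp_density N)" unfolding L_def by simp
  also have "\<dots> = 1" using M0_N1 True by (simp add: integral_unique)
  finally show ?thesis using K_E0[OF assms] a1 by simp
next
  case False
  define M where "M = integral {-1..1} (mu_cp_density N)"
  have "real N > 1" using assms False by simp
  hence "sqrt (real N) > 1" by simp
  hence a: "0 < a" "a < 1" using assms(2) by auto
  have bnd: "\<bar>L N (Pc a 1)\<bar> \<le> a ^ j * (2 * real (Suc (Suc j)) * M)" for j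
  proof -
    have "\<bar>L N (Pc a (Suc j))\<bar> \<le> 2 * real (Suc (Suc j)) * M"
      unfolding M_def
    proof (rule L_bound[OF assms(1) cPc])
      fix x :: real assume "x \<in> {-1..1}"
      thus "\<bar>Pc a (Suc j) x\<bar> \<le> 2 * real (Suc (Suc j))"
        using Pc_bound[of x a "Suc j"] a by auto
    qed
    hence "a ^ j * \<bar>L N (Pc a (Suc j))\<bar> \<le> a ^ j * (2 * real (Suc (Suc j)) * M)"
      using a by (intro mult_left_mono) auto
    thus ?thesis using K1_pow[OF assms, of j] a by (simp add: abs_mult)
  qed
  have lim: "(\<lambda>j. a ^ j * (2 * real (Suc (Suc j)) * M)) \<longlonglongrightarrow> 0"
  proof -
    have "(\<lambda>j. 2 * M * (real j * a ^ j) + 4 * M * a ^ j) \<longlonglongrightarrow> 2 * M * 0 + 4 * M * 0"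
    proof -
      have l1: "(\<lambda>j. real j * a ^ j) \<longlonglongrightarrow> 0" by (rule powser_times_n_limit_0) (use a in simp)
      have l2: "(\<lambda>j. a ^ j) \<longlonglongrightarrow> 0" by (rule LIMSEQ_power_zero) (use a in simp)
      show ?thesis by (intro tendsto_add tendsto_mult_left l1 l2)
    qed
    moreover have "(\<lambda>j. 2 * M * (real j * a ^ j) + 4 * M * a ^ j) = (\<lambda>j. a ^ j * (2 * real (Suc (Suc j)) * M))"
      by (simp add: fun_eq_iff algebra_simps)
    ultimately show ?thesis by simp
  qed
  have "\<bar>L N (Pc a 1)\<bar> \<le> 0"
  proof (rule LIMSEQ_le_const[OF lim])
    show "\<exists>N0. \<forall>j\<ge>N0. \<bar>L N (Pc a 1)\<bar> \<le> a ^ j * (2 * real (Suc (Suc j)) * M)"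
      by (intro exI[of _ 0] allI impI bnd)
  qed
  thus ?thesis by simp
qed

lemma K_delta: assumes "N \<ge> 1" "a = 1 / sqrt (real N)"
  shows "L N (Pc a k) = (if k = 0 then 1 else 0)"
proof (cases k)
  case 0 thus ?thesis using K_E0[OF assms] K1_zero[OF assms] by simp
next
  case (Suc j)
  have a: "a \<noteq> 0" using assms by simp
  have "L N (Pc a 1) = a ^ j * L N (Pc a (Suc j))" by (rule K1_pow[OF assms])
  thus ?thesis using K1_zero[OF assms] a Suc by simp
qed

lemma A_Vc: assumes "N \<ge> 1" "a = 1 / sqrt (real N)"
  shows "L N (\<lambda>x. x ^ n * Pc a k x) = Vc a n k"
proof (induction n arbitrary: k)
  case 0 thus ?case using K_delta[OF assms] by simp
next
  case (Suc n)
  have c: "continuous_on {-1..1} (\<lambda>x. x ^ n * Pc a k x)" for k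
    by (intro continuous_intros cPc)
  show ?case
  proof (cases k)
    case 0
    have "L N (\<lambda>x. x ^ Suc n * Pc a k x) = L N (\<lambda>x. (a / 2) * (x ^ n * Pc a 0 x) + (1 / 2) * (x ^ n * Pc a 1 x))"
    proof (rule L_cong)
      fix x :: real
      have r: "2 * x * Pc a 0 x = a * Pc a 0 x + Pc a 1 x" by (rule Pc_rec0)
      have "x ^ Suc n * Pc a k x = (1 / 2) * x ^ n * (2 * x * Pc a 0 x)" using 0 by (simp del: Pc.simps)
      thus "x ^ Suc n * Pc a k x = (a / 2) * (x ^ n * Pc a 0 x) + (1 / 2) * (x ^ n * Pc a 1 x)"
        unfolding r by (simp del: Pc.simps add: algebra_simps)
    qed
    also have "\<dots> = (a / 2) * L N (\<lambda>x. x ^ n * Pc a 0 x) + (1 / 2) * L N (\<lambda>x. x ^ n * Pc a 1 x)"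
      by (rule L_lin[OF assms(1) c c])
    also have "\<dots> = (a / 2) * Vc a n 0 + (1 / 2) * Vc a n 1" by (simp only: Suc.IH)
    also have "\<dots> = Vc a (Suc n) k" using 0 by (simp add: field_simps)
    finally show ?thesis .
  next
    case (Suc j)
    have "L N (\<lambda>x. x ^ Suc n * Pc a k x) = L N (\<lambda>x. (1 / 2) * (x ^ n * Pc a j x) + (1 / 2) * (x ^ n * Pc a (Suc (Suc j)) x))"
    proof (rule L_cong)
      fix x :: real
      have r: "2 * x * Pc a (Suc j) x = Pc a (Suc (Suc j)) x + Pc a j x" by (rule Pc_rec)
      have "x ^ Suc n * Pc a k x = (1 / 2) * x ^ n * (2 * x * Pc a (Suc j) x)" using Suc by (simp del: Pc.simps)
      thus "x ^ Suc n * Pc a k x = (1 / 2) * (x ^ n * Pc a j x) + (1 / 2) * (x ^ n * Pc a (Suc (Suc j)) x)"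
        unfolding r by (simp del: Pc.simps add: algebra_simps)
    qed
    also have "\<dots> = (1 / 2) * L N (\<lambda>x. x ^ n * Pc a j x) + (1 / 2) * L N (\<lambda>x. x ^ n * Pc a (Suc (Suc j)) x)"
      by (rule L_lin[OF assms(1) c c])
    also have "\<dots> = (1 / 2) * Vc a n j + (1 / 2) * Vc a n (Suc (Suc j))" by (simp only: Suc.IH)
    also have "\<dots> = Vc a (Suc n) k" using \<open>k = Suc j\<close> by (simp add: field_simps)
    finally show ?thesis .
  qed
qed

theorem theorem4p11:
  fixes N n :: nat
  assumes "N \<ge> 1"
  shows "((\<lambda>x. x ^ n * mu_cp_density N x) has_integral
            (real (N_tilde N n) / (2 * sqrt (real N)) ^ n)) {-1..1}"
proof -
  define a where "a = 1 / sqrt (real N)"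
  have c: "continuous_on {-1..1} (\<lambda>x::real. x ^ n)" by (intro continuous_intros)
  have h: "((\<lambda>x. x ^ n * mu_cp_density N x) has_integral L N (\<lambda>x. x ^ n)) {-1..1}"
    by (rule L_has[OF assms c])
  have "L N (\<lambda>x. x ^ n) = L N (\<lambda>x. x ^ n * Pc a 0 x)" by (rule L_cong) simp
  also have "\<dots> = Vc a n 0" by (rule A_Vc[OF assms a_def])
  also have "\<dots> = real (Wc N n 0) * sqrt (real N) ^ 0 / (2 * sqrt (real N)) ^ n"
    unfolding a_def by (rule Vc_Wc[OF assms])
  also have "\<dots> = real (N_tilde N n) / (2 * sqrt (real N)) ^ n" by (simp add: N_tilde_Wc)
  finally show ?thesis using h by simp
qed

end
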